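(* Let $\delta_\ell=94/194$. Let $G=(V,E)$ be an $(n-4)$-regular graph on $n>4$ nodes in which every clique has at most $\delta_\ell n$ nodes. Let $V_i\subseteq V$ with $|V_i|=(\frac12+\delta)n$ for some $0<\delta<\frac12$, and let $\widehat{\alpha}\,n$ be the number of nodes of a largest clique in the subgraph induced by $V\setminus V_i$. Then $$n(n-4)\,\mathsf M(V_i)\le\Big(4\delta^2-\delta-\tfrac12+2\widehat\alpha\Big)n\le\Big(2\delta_\ell-\tfrac12\Big)n.$$
   Context: For a finite simple undirected graph $G=(V,E)$ with $m=|E|\ge1$ edges, degrees $d_v$, and $a_{u,v}=1$ if $\{u,v\}\in E$ and $0$ otherwise: for $C\subseteq V$, $\mathsf M(C)=\frac{1}{2m}\sum_{u\in C}\sum_{v\in C}\big(a_{u,v}-\frac{d_ud_v}{2m}\big)$, the sum over all ordered pairs including $u=v$. *)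

theory Defs
  imports "HOL-Analysis.Analysis"
begin

definition simple_graph :: "'a set \<Rightarrow> 'a set set \<Rightarrow> bool" where
  "simple_graph V E \<longleftrightarrow> finite V \<and> (\<forall>e\<in>E. \<exists>u v. e = {u, v} \<and> u \<noteq> v \<and> u \<in> V \<and> v \<in> V)"

definition adj :: "'a set set \<Rightarrow> 'a \<Rightarrow> 'a \<Rightarrow> real" where
  "adj E u v = (if {u, v} \<in> E then 1 else 0)"

definition degree :: "'a set set \<Rightarrow> 'a \<Rightarrow> nat" where
  "degree E v = card {u. {u, v} \<in> E}"

definition num_edges :: "'a set set \<Rightarrow> nat" where
  "num_edges E = card E"

text \<open>Modularity of a vertex set C (sum over all ordered pairs, including u = v).\<close>
definition modularity :: "'a set set \<Rightarrow> 'a set \<Rightarrow> real" where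
  "modularity E C = 1 / (2 * real (num_edges E)) *
     (\<Sum>u\<in>C. \<Sum>v\<in>C. adj E u v - real (degree E u) * real (degree E v) / (2 * real (num_edges E)))"

definition regular :: "'a set \<Rightarrow> 'a set set \<Rightarrow> nat \<Rightarrow> bool" where
  "regular V E k \<longleftrightarrow> (\<forall>v\<in>V. degree E v = k)"

definition clique :: "'a set set \<Rightarrow> 'a set \<Rightarrow> bool" where
  "clique E K \<longleftrightarrow> (\<forall>u\<in>K. \<forall>v\<in>K. u \<noteq> v \<longrightarrow> {u, v} \<in> E)"

text \<open>Number of nodes of a largest clique in the subgraph of (V,E) induced by S \<subseteq> V
  (cliques of the induced subgraph are exactly the cliques of G contained in S).\<close>
definition max_clique_size :: "'a set set \<Rightarrow> 'a set \<Rightarrow> nat" where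
  "max_clique_size E S = Max {card K | K. K \<subseteq> S \<and> clique E K}"

definition delta_l :: real where
  "delta_l = 94 / 194"

end

theory Submission
  imports Defs
begin

definition nb :: "'a set set \<Rightarrow> 'a \<Rightarrow> 'a \<Rightarrow> real" where
  "nb E u v = (if u \<noteq> v \<and> {u, v} \<notin> E then 1 else 0)"

lemma nb_sym: "nb E u v = nb E v u"
  by (simp add: nb_def insert_commute eq_commute)

lemma nb_nonneg: "nb E u v \<ge> 0"
  by (simp add: nb_def)

lemma clique_bound:
  "finite S \<Longrightarrow> \<exists>K\<subseteq>S. clique E K \<and>
     2 * (real (card S) - real (card K)) \<le> (\<Sum>x\<in>S. \<Sum>y\<in>S. nb E x y)"
proof (induction "card S" arbitrary: S rule: less_induct)
  case less
  show ?case
  proof (cases "\<forall>u\<in>S. \<forall>v\<in>S. nb E u v = 0")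
    case True
    then have "clique E S" unfolding clique_def nb_def by (auto split: if_splits)
    moreover have "0 \<le> (\<Sum>x\<in>S. \<Sum>y\<in>S. nb E x y)"
      by (intro sum_nonneg) (simp add: nb_nonneg)
    ultimately show ?thesis by auto
  next
    case False
    then obtain u v where uv: "u \<in> S" "v \<in> S" "nb E u v \<noteq> 0" by auto
    then have nbuv: "nb E u v = 1" "u \<noteq> v" by (auto simp: nb_def split: if_splits)
    define S' where "S' = S - {u}"
    have S: "S = insert u S'" "u \<notin> S'" "finite S'" using uv less.prems by (auto simp: S'_def)
    have vS': "v \<in> S'" using uv nbuv by (auto simp: S'_def)
    have cS: "card S = Suc (card S')" using S by simp
    from less.hyps[of S'] cS S(3) obtain K where K: "K \<subseteq> S'" "clique E K"
      "2 * (real (card S') - real (card K)) \<le> (\<Sum>x\<in>S'. \<Sum>y\<in>S'. nb E x y)" by auto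
    have a: "(\<Sum>y\<in>S. nb E u y) \<ge> 1"
    proof -
      have "nb E u v \<le> (\<Sum>y\<in>S. nb E u y)"
        by (rule member_le_sum) (use uv less.prems in \<open>auto simp: nb_nonneg\<close>)
      then show ?thesis using nbuv by simp
    qed
    have b: "(\<Sum>x\<in>S'. \<Sum>y\<in>S. nb E x y) \<ge> 1 + (\<Sum>x\<in>S'. \<Sum>y\<in>S'. nb E x y)"
    proof -
      have "(\<Sum>x\<in>S'. \<Sum>y\<in>S. nb E x y) = (\<Sum>x\<in>S'. nb E x u) + (\<Sum>x\<in>S'. \<Sum>y\<in>S'. nb E x y)"
        using S by (simp add: sum.distrib)
      moreover have "nb E v u \<le> (\<Sum>x\<in>S'. nb E x u)"
        by (rule member_le_sum) (use vS' S in \<open>auto simp: nb_nonneg\<close>)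
      moreover have "nb E v u = 1" using nbuv nb_sym by metis
      ultimately show ?thesis by simp
    qed
    have "(\<Sum>x\<in>S. \<Sum>y\<in>S. nb E x y) = (\<Sum>y\<in>S. nb E u y) + (\<Sum>x\<in>S'. \<Sum>y\<in>S. nb E x y)"
      using S by simp
    then have "(\<Sum>x\<in>S. \<Sum>y\<in>S. nb E x y) \<ge> 2 + (\<Sum>x\<in>S'. \<Sum>y\<in>S'. nb E x y)"
      using a b by linarith
    moreover have "K \<subseteq> S" using K S by auto
    ultimately show ?thesis using K cS by (intro exI[of _ K]) auto
  qed
qed

theorem lemma7:
  fixes V :: "'a set" and E :: "'a set set" and n :: nat and Vi :: "'a set"
    and \<delta> :: real and alpha_hat :: real
  assumes "simple_graph V E"
    and "card V = n" and "n > 4"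
    and "regular V E (n - 4)"
    and "\<forall>K. K \<subseteq> V \<and> clique E K \<longrightarrow> real (card K) \<le> delta_l * real n"
    and "Vi \<subseteq> V" and "real (card Vi) = (1/2 + \<delta>) * real n"
    and "0 < \<delta>" and "\<delta> < 1/2"
    and "alpha_hat * real n = real (max_clique_size E (V - Vi))"
  shows "real n * (real n - 4) * modularity E Vi \<le> (4 * \<delta>^2 - \<delta> - 1/2 + 2 * alpha_hat) * real n
       \<and> (4 * \<delta>^2 - \<delta> - 1/2 + 2 * alpha_hat) * real n \<le> (2 * delta_l - 1/2) * real n"
proof -
  note sg = assms(1)[unfolded simple_graph_def]
  have finV: "finite V" using sg by blast
  have edge2: "\<And>e. e \<in> E \<Longrightarrow> \<exists>u v. e = {u, v} \<and> u \<noteq> v \<and> u \<in> V \<and> v \<in> V" using sg by blast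
  have noloop: "{u} \<notin> E" for u
  proof
    assume "{u} \<in> E"
    then obtain a b where "{u} = {a, b}" "a \<noteq> b" using edge2 by blast
    then show False by (metis doubleton_eq_iff insert_absorb2)
  qed
  have inV: "w \<in> V" if "{w, u} \<in> E" for w u
    using edge2[OF that] by (metis doubleton_eq_iff)
  have finE: "finite E"
  proof (rule finite_subset[of _ "Pow V"])
    show "E \<subseteq> Pow V" using edge2 by blast
  qed (use finV in auto)
  have rN: "real (n - 4) = real n - 4" using assms(3) by simp
  have Npos: "real n > 4" using assms(3) by simp
  have adj_eq: "adj E u v = 1 - nb E u v - (if u = v then 1 else 0)" for u v
    using noloop by (auto simp: adj_def nb_def)
  have deg: "real (degree E u) = (\<Sum>v\<in>V. adj E u v)" if "u \<in> V" for u
  proof -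
    have "{w. {w, u} \<in> E} = {v\<in>V. {u, v} \<in> E}" using inV by (auto simp: insert_commute)
    moreover have "(\<Sum>v\<in>V. adj E u v) = real (card {v\<in>V. {u, v} \<in> E})"
      unfolding adj_def by (simp add: sum.If_cases finV Collect_conj_eq Int_commute)
    ultimately show ?thesis by (simp add: degree_def)
  qed
  have degn: "real (degree E u) = real n - 4" if "u \<in> V" for u
    using assms(4) that rN by (simp add: regular_def)
  have nbrow: "(\<Sum>v\<in>V. nb E u v) = 3" if "u \<in> V" for u
  proof -
    have "(\<Sum>v\<in>V. adj E u v) = (\<Sum>v\<in>V. 1 - nb E u v - (if u = v then 1 else 0))"
      by (simp add: adj_eq)
    also have "\<dots> = real n - (\<Sum>v\<in>V. nb E u v) - 1"
      using that finV assms(2) by (simp add: sum_subtractf)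
    finally show ?thesis using deg[OF that] degn[OF that] by simp
  qed
  have degcard: "degree E u = card {e\<in>E. u \<in> e}" for u
  proof -
    have "bij_betw (\<lambda>w. {w, u}) {w. {w, u} \<in> E} {e\<in>E. u \<in> e}"
    proof (rule bij_betwI')
      fix x y assume "x \<in> {w. {w, u} \<in> E}" "y \<in> {w. {w, u} \<in> E}"
      show "({x, u} = {y, u}) = (x = y)" by (auto simp: doubleton_eq_iff)
    next
      fix y assume y: "y \<in> {e\<in>E. u \<in> e}"
      then obtain a b where ab: "y = {a, b}" "a \<noteq> b" using edge2 by blast
      show "\<exists>x\<in>{w. {w, u} \<in> E}. y = {x, u}"
      proof (cases "u = a")
        case True then show ?thesis using y ab by (intro bexI[of _ b]) (auto simp: insert_commute)
      next
        case False then have "u = b" using y ab by auto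
        then show ?thesis using y ab by (intro bexI[of _ a]) auto
      qed
    qed auto
    then show ?thesis unfolding degree_def by (rule bij_betw_same_card)
  qed
  have hs: "2 * real (card E) = real n * (real n - 4)"
  proof -
    have "(\<Sum>u\<in>V. card {e\<in>E. u \<in> e}) = (\<Sum>e\<in>E. card {u\<in>V. u \<in> e})"
      using sum.swap_restrict[OF finV finE, of "\<lambda>_ _. (1::nat)" "\<lambda>u e. u \<in> e"] by simp
    also have "\<dots> = (\<Sum>e\<in>E. 2)"
    proof (rule sum.cong)
      fix e assume "e \<in> E"
      then obtain a b where "e = {a, b}" "a \<noteq> b" "a \<in> V" "b \<in> V" using edge2 by blast
      then have "{u\<in>V. u \<in> e} = {a, b}" by auto
      then show "card {u\<in>V. u \<in> e} = 2" using \<open>a \<noteq> b\<close> by simp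
    qed simp
    finally have "(\<Sum>u\<in>V. degree E u) = 2 * card E" by (simp add: degcard)
    then have "2 * real (card E) = (\<Sum>u\<in>V. real (degree E u))" by (metis of_nat_mult of_nat_sum of_nat_numeral)
    also have "\<dots> = (\<Sum>u\<in>V. real n - 4)" by (rule sum.cong) (auto simp: degn)
    finally show ?thesis using assms(2) by simp
  qed
  define C where "C = V - Vi"
  have finVi: "finite Vi" and finC: "finite C" using finV assms(6) finite_subset by (auto simp: C_def)
  have VU: "V = Vi \<union> C" "Vi \<inter> C = {}" using assms(6) by (auto simp: C_def)
  have cardC: "real (card C) = real n - real (card Vi)"
    using VU finVi finC assms(2) card_Un_disjoint by (metis add_diff_cancel_left' of_nat_add)
  define NB where "NB A B = (\<Sum>x\<in>A. \<Sum>y\<in>B. nb E x y)" for A B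
  have row: "NB A V = 3 * real (card A)" if "A \<subseteq> V" for A
    unfolding NB_def using that nbrow by (simp add: subset_iff)
  have split: "NB A V = NB A Vi + NB A C" for A
    unfolding NB_def using VU finVi finC by (simp add: sum.union_disjoint sum.distrib)
  have symm: "NB Vi C = NB C Vi"
    unfolding NB_def by (subst sum.swap) (simp add: nb_sym)
  have NBi: "NB Vi Vi = 3 * real (card Vi) - 3 * real (card C) + NB C C"
    using row[OF assms(6)] row[of C] split[of Vi] split[of C] symm by (simp add: C_def)
  define k where "k = real (card Vi)"
  have Sdef: "(\<Sum>u\<in>Vi. \<Sum>v\<in>Vi. adj E u v) = k * k - NB Vi Vi - k"
  proof -
    have "(\<Sum>u\<in>Vi. \<Sum>v\<in>Vi. adj E u v) = (\<Sum>u\<in>Vi. real (card Vi) - (\<Sum>v\<in>Vi. nb E u v) - 1)"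
      by (rule sum.cong) (auto simp: adj_eq sum_subtractf finVi)
    then show ?thesis by (simp add: sum_subtractf NB_def k_def)
  qed
  obtain K where K: "K \<subseteq> C" "clique E K" "2 * (real (card C) - real (card K)) \<le> NB C C"
    using clique_bound[OF finC, of E] unfolding NB_def by blast
  define Q where "Q = {card K | K. K \<subseteq> C \<and> clique E K}"
  have finQ: "finite Q" unfolding Q_def using finC by simp
  have "card K \<in> Q" using K by (auto simp: Q_def)
  then have Kle: "card K \<le> max_clique_size E C" using finQ by (simp add: max_clique_size_def Q_def[symmetric])
  have "{} \<subseteq> C \<and> clique E {}" by (simp add: clique_def)
  then have "Q \<noteq> {}" unfolding Q_def by blast
  then have "Max Q \<in> Q" using finQ by simp
  then obtain K0 where K0: "K0 \<subseteq> C" "clique E K0" "max_clique_size E C = card K0"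
    by (auto simp: Q_def max_clique_size_def)
  have w1: "real (card K0) \<le> delta_l * real n" using assms(5) K0 by (auto simp: C_def)
  have w2: "card K0 \<le> card C" using K0 finC card_mono by blast
  have al: "alpha_hat * real n = real (card K0)" using assms(10) K0 by (simp add: C_def)
  have Dpos: "real n * (real n - 4) > 0" using Npos by simp
  have mod: "real n * (real n - 4) * modularity E Vi = k * k - NB Vi Vi - k - k * k * (real n - 4) / real n"
  proof -
    have "(\<Sum>u\<in>Vi. \<Sum>v\<in>Vi. adj E u v - real (degree E u) * real (degree E v) / (2 * real (num_edges E)))
        = (\<Sum>u\<in>Vi. \<Sum>v\<in>Vi. adj E u v - (real n - 4) * (real n - 4) / (real n * (real n - 4)))"
    proof (intro sum.cong refl)
      fix u v assume "u \<in> Vi" "v \<in> Vi"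
      then show "adj E u v - real (degree E u) * real (degree E v) / (2 * real (num_edges E))
        = adj E u v - (real n - 4) * (real n - 4) / (real n * (real n - 4))"
        using assms(6) degn hs by (auto simp: num_edges_def subset_iff)
    qed
    also have "\<dots> = k * k - NB Vi Vi - k - k * k * (real n - 4) / real n"
      using Npos by (simp add: sum_subtractf Sdef k_def)
    finally show ?thesis unfolding modularity_def num_edges_def hs using Dpos Npos by simp
  qed
  have kv: "k = (1/2 + \<delta>) * real n" using assms(7) k_def by simp
  have kk: "k * k * (real n - 4) / real n = k * k - 4 * ((1/2 + \<delta>)^2 * real n)"
    using Npos unfolding kv by (simp add: field_simps power2_eq_square)
  have Kr: "real (card K) \<le> alpha_hat * real n" using Kle K0 al by simp
  have p1: "real n * (real n - 4) * modularity E Vi \<le> (4 * \<delta>^2 - \<delta> - 1/2 + 2 * alpha_hat) * real n"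
    unfolding mod kk NBi using K(3) Kr cardC kv
    by (simp add: power2_eq_square algebra_simps k_def)
  have a1: "alpha_hat \<le> delta_l" using w1 al Npos by (metis mult_le_cancel_right of_nat_0_less_iff not_le order.strict_trans zero_less_numeral)
  have a2: "alpha_hat \<le> 1/2 - \<delta>"
  proof -
    have "alpha_hat * real n \<le> (1/2 - \<delta>) * real n" using al w2 cardC assms(7) by (simp add: algebra_simps)
    then show ?thesis using Npos by simp
  qed
  have "4 * \<delta>^2 - \<delta> + 2 * alpha_hat \<le> 2 * delta_l"
  proof (cases "\<delta> \<le> 1/4")
    case True
    have "\<delta> * (4 * \<delta> - 1) \<le> 0" using True assms(8) by (intro mult_nonneg_nonpos) auto
    then show ?thesis using a1 by (simp add: power2_eq_square algebra_simps)
  next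
    case False
    have "(4 * \<delta> - 1) * (2 * \<delta> - 1) \<le> 0" using False assms(9) by (intro mult_nonneg_nonpos) auto
    then show ?thesis using a2 by (simp add: power2_eq_square algebra_simps delta_l_def)
  qed
  then have p2: "(4 * \<delta>^2 - \<delta> - 1/2 + 2 * alpha_hat) * real n \<le> (2 * delta_l - 1/2) * real n"
    using Npos by (intro mult_right_mono) auto
  show ?thesis using p1 p2 by blast
qed

end
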